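(* Let $n\ge 2$, $p>n-1$, let $D\subset\mathbb{R}^n$ be a domain, let $F_1,F_2,F_3$ be sets in $D$, and put $\Gamma_{i,j}=\Gamma(F_i,F_j,D)$, $1\le i,j\le3$. Then $$M_p(\Gamma_{1,2})\ge 3^{-p}\min\Big\{M_p(\Gamma_{1,3}),\,M_p(\Gamma_{2,3}),\,\inf M_p\big(\Gamma(|\gamma_{1,3}|,|\gamma_{2,3}|,D)\big)\Big\},$$ where the infimum is taken over all rectifiable paths $\gamma_{1,3}\in\Gamma_{1,3}$ and $\gamma_{2,3}\in\Gamma_{2,3}$.
   Context: $|\gamma|$ denotes the locus (image) of a path $\gamma$. For a path family $\Gamma$, $M_p(\Gamma)=\inf\int_{\mathbb{R}^n}\rho^p\,dm$ over Borel $\rho\ge0$ with $\int_\gamma\rho\,|dx|\ge1$ for all locally rectifiable $\gamma\in\Gamma$. $\Gamma(E,F,G)$ is the family of paths $\gamma:[s,t]\to\overline{\mathbb{R}^n}$ with $\gamma(s)\in E$, $\gamma(t)\in F$, $\gamma(\tau)\in G$ for $s<\tau<t$. *)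

theory Defs
  imports "HOL-Analysis.Analysis"
begin

text \<open>A path is represented as a triple (s, t, g) with s < t, where g is
  continuous on the closed parameter interval [s,t]; values of g outside
  [s,t] are irrelevant.\<close>

definition is_path :: "real \<times> real \<times> (real \<Rightarrow> 'a::real_normed_vector) \<Rightarrow> bool" where
  "is_path c = (case c of (s, t, g) \<Rightarrow> s < t \<and> continuous_on {s..t} g)"

definition locus :: "real \<times> real \<times> (real \<Rightarrow> 'a) \<Rightarrow> 'a set" where
  "locus c = (case c of (s, t, g) \<Rightarrow> g ` {s..t})"

definition var_length :: "(real \<Rightarrow> 'a::metric_space) \<Rightarrow> real \<Rightarrow> real \<Rightarrow> ennreal" where
  "var_length g a b =
     (SUP ts \<in> {ts. sorted ts \<and> ts \<noteq> [] \<and> hd ts = a \<and> last ts = b}.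
        ennreal (\<Sum>i<length ts - 1. dist (g (ts ! i)) (g (ts ! Suc i))))"

text \<open>A path on a closed interval is locally rectifiable iff it is rectifiable.\<close>
definition rectifiable :: "real \<times> real \<times> (real \<Rightarrow> 'a::real_normed_vector) \<Rightarrow> bool" where
  "rectifiable c = (case c of (s, t, g) \<Rightarrow> is_path c \<and> var_length g s t < \<infinity>)"

definition arclen_fun :: "real \<times> real \<times> (real \<Rightarrow> 'a::metric_space) \<Rightarrow> real \<Rightarrow> real" where
  "arclen_fun c = (case c of (s, t, g) \<Rightarrow> (\<lambda>x. enn2real (var_length g s (max s (min x t)))))"

definition line_integral :: "('a::real_normed_vector \<Rightarrow> ennreal) \<Rightarrow> real \<times> real \<times> (real \<Rightarrow> 'a) \<Rightarrow> ennreal" where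
  "line_integral \<rho> c = (case c of (s, t, g) \<Rightarrow>
      (\<integral>\<^sup>+ x \<in> {s..t}. \<rho> (g x) \<partial>(interval_measure (arclen_fun c))))"

definition enn_powr :: "ennreal \<Rightarrow> real \<Rightarrow> ennreal" where
  "enn_powr x p = (if x = \<infinity> then \<infinity> else ennreal (enn2real x powr p))"

definition admissible :: "real \<Rightarrow> (real \<times> real \<times> (real \<Rightarrow> 'a::euclidean_space)) set \<Rightarrow> ('a \<Rightarrow> ennreal) \<Rightarrow> bool" where
  "admissible p \<Gamma> \<rho> = (\<rho> \<in> borel_measurable borel \<and>
      (\<forall>c\<in>\<Gamma>. rectifiable c \<longrightarrow> line_integral \<rho> c \<ge> 1))"

definition p_modulus :: "real \<Rightarrow> (real \<times> real \<times> (real \<Rightarrow> 'a::euclidean_space)) set \<Rightarrow> ennreal" where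
  "p_modulus p \<Gamma> = (INF \<rho> \<in> {\<rho>. admissible p \<Gamma> \<rho>}. \<integral>\<^sup>+ x. enn_powr (\<rho> x) p \<partial>lborel)"

definition connecting_paths :: "'a set \<Rightarrow> 'a set \<Rightarrow> 'a set \<Rightarrow> (real \<times> real \<times> (real \<Rightarrow> 'a::real_normed_vector)) set" where
  "connecting_paths E F G = {(s, t, g). is_path (s, t, g) \<and> g s \<in> E \<and> g t \<in> F \<and>
      (\<forall>\<tau>. s < \<tau> \<and> \<tau> < t \<longrightarrow> g \<tau> \<in> G)}"

end

theory Submission
  imports Defs
begin


fun ps :: "(real \<Rightarrow> 'a::metric_space) \<Rightarrow> real list \<Rightarrow> real" where
  "ps g (x # y # r) = dist (g x) (g y) + ps g (y # r)"
| "ps g _ = 0"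

definition valid :: "real \<Rightarrow> real \<Rightarrow> real list \<Rightarrow> bool" where
  "valid a b ts \<longleftrightarrow> sorted ts \<and> ts \<noteq> [] \<and> hd ts = a \<and> last ts = b"

lemma ps_nonneg: "0 \<le> ps g ts"
  by (induction g ts rule: ps.induct) auto

lemma sum_eq_ps: "(\<Sum>i<length ts - 1. dist (g (ts ! i)) (g (ts ! Suc i))) = ps g ts"
proof (induction g ts rule: ps.induct)
  case (1 g x y r)
  have "(\<Sum>i<length (x # y # r) - 1. dist (g ((x # y # r) ! i)) (g ((x # y # r) ! Suc i)))
      = (\<Sum>i<Suc (length (y # r) - 1). dist (g ((x # y # r) ! i)) (g ((x # y # r) ! Suc i)))"
    by simp
  also have "\<dots> = dist (g x) (g y) + (\<Sum>i<length (y # r) - 1. dist (g ((y # r) ! i)) (g ((y # r) ! Suc i)))"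
    by (subst sum.lessThan_Suc_shift) simp
  finally show ?case using 1 by simp
qed auto

lemma V_def': "var_length g a b = (SUP ts \<in> {ts. valid a b ts}. ennreal (ps g ts))"
  unfolding var_length_def valid_def sum_eq_ps by simp

lemma V_ge: "valid a b ts \<Longrightarrow> ennreal (ps g ts) \<le> var_length g a b"
  unfolding V_def' by (rule SUP_upper) auto

lemma V_le: "(\<And>ts. valid a b ts \<Longrightarrow> ennreal (ps g ts) \<le> B) \<Longrightarrow> var_length g a b \<le> B"
  unfolding V_def' by (rule SUP_least) auto

lemma ps_append: "xs \<noteq> [] \<Longrightarrow> ys \<noteq> [] \<Longrightarrow>
   ps g (xs @ ys) = ps g xs + dist (g (last xs)) (g (hd ys)) + ps g ys"
proof (induction g xs rule: ps.induct)
  case (1 g x y r)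
  then show ?case by simp
qed (auto simp: neq_Nil_conv)

lemma ps_rev: "ps g (rev xs) = ps g xs"
proof (induction g xs rule: ps.induct)
  case (1 g x y r)
  have "ps g (rev (x # y # r)) = ps g (rev (y # r) @ [x])" by simp
  also have "\<dots> = ps g (rev (y # r)) + dist (g y) (g x)"
    by (subst ps_append) (auto simp: last_rev)
  finally show ?case using 1 by (simp add: dist_commute)
qed auto

lemma ps_map: "ps g (map f ts) = ps (g \<circ> f) ts"
  by (induction "g \<circ> f" ts rule: ps.induct) auto

lemma ps_cong: "(\<And>x. x \<in> set ts \<Longrightarrow> g x = g' x) \<Longrightarrow> ps g ts = ps g' ts"
  by (induction g ts rule: ps.induct) auto

lemma ps_const: "(\<And>x. x \<in> set ts \<Longrightarrow> x = c) \<Longrightarrow> ps g ts = 0"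
  by (induction g ts rule: ps.induct) auto

lemma sorted_hd_le: "sorted xs \<Longrightarrow> x \<in> set xs \<Longrightarrow> hd xs \<le> x"
  by (cases xs) auto

lemma sorted_le_last: "sorted xs \<Longrightarrow> x \<in> set xs \<Longrightarrow> x \<le> last xs"
proof -
  assume s: "sorted xs" and x: "x \<in> set xs"
  then have ne: "xs \<noteq> []" by auto
  have "xs = butlast xs @ [last xs]" using ne by simp
  then have "sorted (butlast xs @ [last xs])" using s by metis
  then have "\<forall>y\<in>set (butlast xs). y \<le> last xs" by (simp add: sorted_append)
  moreover have "x \<in> set (butlast xs) \<or> x = last xs"
    using x ne by (metis \<open>xs = butlast xs @ [last xs]\<close> rotate1.simps(2) set_ConsD set_rotate1)
  ultimately show ?thesis by auto
qed

lemma valid_set: "valid a b ts \<Longrightarrow> x \<in> set ts \<Longrightarrow> a \<le> x \<and> x \<le> b"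
  unfolding valid_def using sorted_hd_le sorted_le_last by metis

lemma valid_ex: "a \<le> b \<Longrightarrow> valid a b [a, b]"
  unfolding valid_def by simp

lemma ps_const_app: "xs \<noteq> [] \<Longrightarrow> (\<And>x. x \<in> set xs \<Longrightarrow> x = c) \<Longrightarrow> ps g (xs @ [y]) = dist (g c) (g y)"
proof -
  assume ne: "xs \<noteq> []" and c: "\<And>x. x \<in> set xs \<Longrightarrow> x = c"
  have "ps g (xs @ [y]) = ps g xs + dist (g (last xs)) (g y) + ps g [y]"
    using ne by (subst ps_append) auto
  moreover have "ps g xs = 0" using c by (rule ps_const)
  moreover have "last xs = c" using ne c by auto
  ultimately show ?thesis by simp
qed

lemma refine:
  assumes s: "sorted ts" and ne: "ts \<noteq> []" and hm: "hd ts \<le> m" and ml: "m < last ts"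
  shows "\<exists>xs ys. ts = xs @ ys \<and> xs \<noteq> [] \<and> ys \<noteq> [] \<and> (\<forall>x\<in>set xs. x \<le> m) \<and> (\<forall>y\<in>set ys. m < y)
     \<and> ps g ts \<le> ps g (xs @ [m]) + ps g (m # ys)"
proof -
  define xs where "xs = takeWhile (\<lambda>x. x \<le> m) ts"
  define ys where "ys = dropWhile (\<lambda>x. x \<le> m) ts"
  have eq: "ts = xs @ ys" unfolding xs_def ys_def by simp
  have xne: "xs \<noteq> []" using ne hm unfolding xs_def by (cases ts) auto
  have yne: "ys \<noteq> []"
  proof
    assume "ys = []"
    then have "ts = xs" using eq by simp
    then have "last ts \<in> set xs" using ne by simp
    then have "last ts \<le> m" unfolding xs_def by (meson set_takeWhileD)
    then show False using ml by simp
  qed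
  have xle: "\<forall>x\<in>set xs. x \<le> m" unfolding xs_def by (meson set_takeWhileD)
  have hy: "m < hd ys" using yne unfolding ys_def using hd_dropWhile by force
  have sy: "sorted ys" using s eq by (metis sorted_append)
  have ygt: "\<forall>y\<in>set ys. m < y" using hy sy sorted_hd_le by fastforce
  have "ps g ts = ps g xs + dist (g (last xs)) (g (hd ys)) + ps g ys"
    using eq xne yne ps_append by metis
  also have "\<dots> \<le> ps g xs + (dist (g (last xs)) (g m) + dist (g m) (g (hd ys))) + ps g ys"
    using dist_triangle by (metis add_le_cancel_right add_mono_thms_linordered_semiring(2))
  also have "\<dots> = ps g (xs @ [m]) + ps g (m # ys)"
    using xne yne by (cases ys) (auto simp: ps_append)
  finally show ?thesis using eq xne yne xle ygt by blast
qed

lemma V_add: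
  assumes am: "a \<le> m" and mb: "m \<le> b"
  shows "var_length g a b = var_length g a m + var_length g m b"
proof (rule antisym)
  show "var_length g a b \<le> var_length g a m + var_length g m b"
  proof (rule V_le)
    fix ts assume v: "valid a b ts"
    show "ennreal (ps g ts) \<le> var_length g a m + var_length g m b"
    proof (cases "m = b")
      case True
      then show ?thesis using V_ge[OF v, of g] by (metis add_increasing2 zero_le)
    next
      case False
      then have ml: "m < last ts" using v mb unfolding valid_def by auto
      from refine[OF _ _ _ ml, of g] v am obtain xs ys where
        xy: "ts = xs @ ys" "xs \<noteq> []" "ys \<noteq> []" "\<forall>x\<in>set xs. x \<le> m" "\<forall>y\<in>set ys. m < y"
        "ps g ts \<le> ps g (xs @ [m]) + ps g (m # ys)"
        unfolding valid_def by auto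
      have sx: "sorted xs" "sorted ys" using v xy unfolding valid_def by (metis sorted_append)+
      have v1: "valid a m (xs @ [m])" using xy sx v unfolding valid_def
        by (auto simp: sorted_append)
      have v2: "valid m b (m # ys)" using xy sx v unfolding valid_def
        by (auto simp: less_imp_le)
      have "ennreal (ps g ts) \<le> ennreal (ps g (xs @ [m]) + ps g (m # ys))"
        using xy(6) by (simp add: ennreal_leI)
      also have "\<dots> = ennreal (ps g (xs @ [m])) + ennreal (ps g (m # ys))"
        by (simp add: ps_nonneg)
      also have "\<dots> \<le> var_length g a m + var_length g m b"
        using V_ge[OF v1] V_ge[OF v2] by (rule add_mono)
      finally show ?thesis .
    qed
  qed
next
  have ne1: "{ts. valid a m ts} \<noteq> {}" using valid_ex[OF am] by auto
  have ne2: "{ts. valid m b ts} \<noteq> {}" using valid_ex[OF mb] by auto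
  have "var_length g a m + var_length g m b =
     (SUP xs \<in> {ts. valid a m ts}. ennreal (ps g xs) + var_length g m b)"
    unfolding V_def'[of g a m] by (rule ennreal_SUP_add_left[symmetric, OF ne1])
  also have "\<dots> \<le> var_length g a b"
  proof (rule SUP_least)
    fix xs assume x: "xs \<in> {ts. valid a m ts}"
    have "ennreal (ps g xs) + var_length g m b = (SUP ys \<in> {ts. valid m b ts}. ennreal (ps g xs) + ennreal (ps g ys))"
      unfolding V_def'[of g m b] by (rule ennreal_SUP_add_right[OF ne2])
    also have "\<dots> \<le> var_length g a b"
    proof (rule SUP_least)
      fix ys assume y: "ys \<in> {ts. valid m b ts}"
      have sx: "sorted xs" "sorted ys" "xs \<noteq> []" "ys \<noteq> []" "last xs = m" "hd ys = m"
        using x y unfolding valid_def by auto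
      have "\<forall>u\<in>set xs. \<forall>v\<in>set ys. u \<le> v"
        using sx sorted_le_last sorted_hd_le by (metis order.trans)
      then have v: "valid a b (xs @ ys)" using x y sx unfolding valid_def
        by (auto simp: sorted_append)
      have "ps g (xs @ ys) = ps g xs + ps g ys" using sx by (simp add: ps_append)
      then have "ennreal (ps g xs) + ennreal (ps g ys) = ennreal (ps g (xs @ ys))"
        by (simp add: ps_nonneg)
      also have "\<dots> \<le> var_length g a b" by (rule V_ge[OF v])
      finally show "ennreal (ps g xs) + ennreal (ps g ys) \<le> var_length g a b" .
    qed
    finally show "ennreal (ps g xs) + var_length g m b \<le> var_length g a b" .
  qed
  finally show "var_length g a m + var_length g m b \<le> var_length g a b" .
qed

lemma V_zero: "var_length g a a = 0"
proof -
  have "var_length g a a \<le> 0"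
  proof (rule V_le)
    fix ts assume v: "valid a a ts"
    have "ps g ts = 0" using valid_set[OF v] by (intro ps_const[of _ a]) force
    then show "ennreal (ps g ts) \<le> 0" by simp
  qed
  then show ?thesis by simp
qed

lemma V_cong: "(\<And>x. x \<in> {a..b} \<Longrightarrow> g x = g' x) \<Longrightarrow> var_length g a b = var_length g' a b"
  unfolding V_def'
proof (rule SUP_cong)
  fix ts assume "(\<And>x. x \<in> {a..b} \<Longrightarrow> g x = g' x)" "ts \<in> {ts. valid a b ts}"
  then show "ennreal (ps g ts) = ennreal (ps g' ts)"
    using valid_set by (metis atLeastAtMost_iff mem_Collect_eq ps_cong)
qed simp

lemma V_refl_le: "var_length (\<lambda>x. g (d - x)) a b \<le> var_length g (d - b) (d - a)"
proof (rule V_le)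
  fix ts assume v: "valid a b ts"
  let ?ts = "rev (map (\<lambda>x. d - x) ts)"
  have "valid (d - b) (d - a) ?ts" using v unfolding valid_def
    by (auto simp: sorted_wrt_rev sorted_wrt_map hd_rev last_rev hd_map last_map
       elim: sorted_wrt_mono_rel[rotated])
  then have "ennreal (ps g ?ts) \<le> var_length g (d - b) (d - a)" by (rule V_ge)
  moreover have "ps g ?ts = ps (\<lambda>x. g (d - x)) ts" by (simp add: ps_rev ps_map comp_def)
  ultimately show "ennreal (ps (\<lambda>x. g (d - x)) ts) \<le> var_length g (d - b) (d - a)" by simp
qed

lemma V_refl: "var_length (\<lambda>x. g (d - x)) a b = var_length g (d - b) (d - a)"
proof (rule antisym)
  show "var_length (\<lambda>x. g (d - x)) a b \<le> var_length g (d - b) (d - a)" by (rule V_refl_le)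
  have "var_length (\<lambda>x. (\<lambda>x. g (d - x)) (d - x)) (d - b) (d - a) \<le> var_length (\<lambda>x. g (d - x)) (d - (d - a)) (d - (d - b))"
    by (rule V_refl_le)
  then show "var_length g (d - b) (d - a) \<le> var_length (\<lambda>x. g (d - x)) a b" by simp
qed



lemma V_fin_sub:
  assumes "a \<le> x" "x \<le> y" "y \<le> b" "var_length g a b \<noteq> \<infinity>"
  shows "var_length g x y \<noteq> \<infinity>"
proof -
  have "var_length g a b = var_length g a x + (var_length g x y + var_length g y b)"
    using assms V_add[of a x b g] V_add[of x y b g] by simp
  then show ?thesis using assms(4) by simp
qed

lemma V_add_real:
  assumes "a \<le> x" "x \<le> y" "var_length g a y \<noteq> \<infinity>"
  shows "enn2real (var_length g a y) = enn2real (var_length g a x) + enn2real (var_length g x y)"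
proof -
  have e: "var_length g a y = var_length g a x + var_length g x y" using assms V_add by blast
  then have "var_length g a x < top" "var_length g x y < top" using assms(3)
    by (auto simp: less_top[symmetric])
  then show ?thesis using e enn2real_plus by metis
qed

lemma V_right:
  assumes cont: "continuous_on {a..b} g" and fin: "var_length g a b \<noteq> \<infinity>"
    and x0: "a \<le> x0" "x0 < b" and e: "0 < e"
  shows "\<exists>\<delta>>0. \<forall>y. x0 < y \<and> y < x0 + \<delta> \<and> y \<le> b \<longrightarrow> enn2real (var_length g x0 y) < e"
proof -
  define R where "R = enn2real (var_length g x0 b)"
  have finb: "var_length g x0 b \<noteq> \<infinity>" using V_fin_sub[of a x0 b b g] x0 fin by simp
  have split: "R = enn2real (var_length g x0 y) + enn2real (var_length g y b)"
    if "x0 \<le> y" "y \<le> b" for y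
    unfolding R_def using V_add_real[of x0 y b g] that finb by simp
  show ?thesis
  proof (cases "R < e")
    case True
    show ?thesis
    proof (intro exI[of _ 1] conjI allI impI)
      fix y assume "x0 < y \<and> y < x0 + 1 \<and> y \<le> b"
      then have "R = enn2real (var_length g x0 y) + enn2real (var_length g y b)" using split by simp
      then show "enn2real (var_length g x0 y) < e" using True enn2real_nonneg[of "var_length g y b"] by linarith
    qed simp
  next
    case False
    have "ennreal (R - e/2) < ennreal R" using False e by (subst ennreal_less_iff) auto
    also have "ennreal R = var_length g x0 b" unfolding R_def using finb
      by (simp add: top.not_eq_extremum)
    finally obtain ts where v: "valid x0 b ts" and lt: "ennreal (R - e/2) < ennreal (ps g ts)"
      unfolding V_def' less_SUP_iff by auto
    have lt': "R - e/2 < ps g ts" using lt False e by (subst (asm) ennreal_less_iff) auto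
    define Z where "Z = {z \<in> set ts. x0 < z}"
    have bZ: "b \<in> Z" using v x0 unfolding Z_def valid_def by auto
    have finZ: "finite Z" unfolding Z_def by simp
    define x1 where "x1 = Min Z"
    have x1: "x1 \<in> Z" unfolding x1_def using finZ bZ Min_in by blast
    have x1gt: "x0 < x1" using x1 unfolding Z_def by simp
    have x1le: "\<And>z. z \<in> set ts \<Longrightarrow> x0 < z \<Longrightarrow> x1 \<le> z" unfolding x1_def Z_def using finZ by simp
    have "x0 \<in> {a..b}" using x0 by simp
    then obtain d1 where d1: "d1 > 0" "\<And>x'. x' \<in> {a..b} \<Longrightarrow> dist x' x0 < d1 \<Longrightarrow> dist (g x') (g x0) < e/4"
      using cont e unfolding continuous_on_iff by (metis divide_pos_pos zero_less_numeral)
    show ?thesis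
    proof (intro exI[of _ "min d1 (x1 - x0)"] conjI allI impI)
      show "0 < min d1 (x1 - x0)" using d1 x1gt by simp
      fix y assume y: "x0 < y \<and> y < x0 + min d1 (x1 - x0) \<and> y \<le> b"
      have "min d1 (x1 - x0) \<le> x1 - x0" by simp
      then have yx1: "y < x1" using y by linarith
      have x1b: "x1 \<le> b" using x1le[of b] bZ unfolding Z_def by auto
      have ml: "y < last ts" using v yx1 x1b unfolding valid_def by simp
      obtain xs ys where xy: "ts = xs @ ys" "xs \<noteq> []" "ys \<noteq> []" "\<forall>x\<in>set xs. x \<le> y" "\<forall>z\<in>set ys. y < z"
        "ps g ts \<le> ps g (xs @ [y]) + ps g (y # ys)"
        using refine[OF _ _ _ ml, of g] v y unfolding valid_def by auto
      have allx0: "z = x0" if "z \<in> set xs" for z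
      proof -
        have zt: "z \<in> set ts" using that xy by simp
        then have "x0 \<le> z" using valid_set[OF v] by simp
        moreover have "\<not> x0 < z" using x1le[OF zt] yx1 xy(4) that by force
        ultimately show ?thesis by simp
      qed
      have p1: "ps g (xs @ [y]) = dist (g x0) (g y)" using ps_const_app[OF xy(2)] allx0 by blast
      have sy: "sorted ys" using v xy unfolding valid_def by (metis sorted_append)
      have vy: "valid y b (y # ys)" using v xy sy unfolding valid_def by (auto simp: less_imp_le)
      have finy: "var_length g y b \<noteq> \<infinity>" using V_fin_sub[of a y b b g] x0 y fin by simp
      have "ennreal (ps g (y # ys)) \<le> var_length g y b" by (rule V_ge[OF vy])
      then have p2: "ps g (y # ys) \<le> enn2real (var_length g y b)"
        using finy enn2real_mono[of "ennreal (ps g (y # ys))" "var_length g y b"] ps_nonneg[of g "y # ys"]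
        by (simp add: less_top[symmetric])
      have "dist (g y) (g x0) < e/4" using y d1 x0 by (intro d1(2)) (auto simp: dist_real_def)
      then have "R - e/2 < e/4 + enn2real (var_length g y b)"
        using lt' xy(6) p1 p2 by (simp add: dist_commute)
      moreover have "R = enn2real (var_length g x0 y) + enn2real (var_length g y b)"
        using split y by simp
      ultimately show "enn2real (var_length g x0 y) < e" using e by linarith
    qed
  qed
qed

lemma V_left:
  assumes cont: "continuous_on {a..b} g" and fin: "var_length g a b \<noteq> \<infinity>"
    and x0: "a < x0" "x0 \<le> b" and e: "0 < e"
  shows "\<exists>\<delta>>0. \<forall>y. x0 - \<delta> < y \<and> y < x0 \<and> a \<le> y \<longrightarrow> enn2real (var_length g y x0) < e"
proof -
  define g' where "g' = (\<lambda>x. g (0 - x))"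
  have Vg': "var_length g' u v = var_length g (- v) (- u)" for u v
    unfolding g'_def by (simp add: V_refl[of g 0 u v, simplified])
  have c': "continuous_on {-b..-a} g'" unfolding g'_def
    by (rule continuous_on_compose2[OF cont]) (auto intro!: continuous_intros)
  have f': "var_length g' (-b) (-a) \<noteq> \<infinity>" using fin Vg' by simp
  obtain d where d: "d > 0" "\<And>y. -x0 < y \<and> y < -x0 + d \<and> y \<le> -a \<Longrightarrow> enn2real (var_length g' (-x0) y) < e"
    using V_right[OF c' f', of "-x0" e] x0 e by auto
  show ?thesis
  proof (intro exI[of _ d] conjI allI impI)
    fix y assume "x0 - d < y \<and> y < x0 \<and> a \<le> y"
    then have "enn2real (var_length g' (-x0) (-y)) < e" using d by auto
    then show "enn2real (var_length g y x0) < e" using Vg' by simp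
  qed (use d in auto)
qed

lemma V_cont:
  assumes cont: "continuous_on {a..b} g" and fin: "var_length g a b \<noteq> \<infinity>"
  shows "continuous_on {a..b} (\<lambda>x. enn2real (var_length g a x))"
  unfolding continuous_on_iff
proof (intro ballI allI impI)
  fix x e :: real assume x: "x \<in> {a..b}" and e: "0 < e"
  obtain dr where dr: "dr > 0" "\<And>y. x < b \<Longrightarrow> x < y \<and> y < x + dr \<and> y \<le> b \<Longrightarrow> enn2real (var_length g x y) < e"
  proof (cases "x < b")
    case True
    then show ?thesis using V_right[OF cont fin, of x e] x e that by auto
  next
    case False
    then show ?thesis using that[of 1] by auto
  qed
  obtain dl where dl: "dl > 0" "\<And>y. a < x \<Longrightarrow> x - dl < y \<and> y < x \<and> a \<le> y \<Longrightarrow> enn2real (var_length g y x) < e"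
  proof (cases "a < x")
    case True
    then show ?thesis using V_left[OF cont fin, of x e] x e that by auto
  next
    case False
    then show ?thesis using that[of 1] by auto
  qed
  show "\<exists>d>0. \<forall>x'\<in>{a..b}. dist x' x < d \<longrightarrow> dist (enn2real (var_length g a x')) (enn2real (var_length g a x)) < e"
  proof (intro exI[of _ "min dr dl"] conjI ballI impI)
    show "0 < min dr dl" using dr dl by simp
    fix y assume y: "y \<in> {a..b}" and dy: "dist y x < min dr dl"
    consider "y = x" | "x < y" | "y < x" by linarith
    then show "dist (enn2real (var_length g a y)) (enn2real (var_length g a x)) < e"
    proof cases
      case 1 then show ?thesis using e by simp
    next
      case 2
      have fy: "var_length g a y \<noteq> \<infinity>" using V_fin_sub[of a a y b g] y fin by simp
      have "enn2real (var_length g a y) = enn2real (var_length g a x) + enn2real (var_length g x y)"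
        using V_add_real[OF _ _ fy, of x] x 2 by simp
      moreover have "enn2real (var_length g x y) < e" using dr(2)[of y] 2 y dy x by (auto simp: dist_real_def)
      ultimately show ?thesis by (simp add: dist_real_def)
    next
      case 3
      have fx: "var_length g a x \<noteq> \<infinity>" using V_fin_sub[of a a x b g] x fin by simp
      have "enn2real (var_length g a x) = enn2real (var_length g a y) + enn2real (var_length g y x)"
        using V_add_real[OF _ _ fx, of y] y 3 by simp
      moreover have "enn2real (var_length g y x) < e" using dl(2)[of y] 3 y dy x by (auto simp: dist_real_def)
      ultimately show ?thesis by (simp add: dist_real_def)
    qed
  qed
qed



lemma cont_right: "continuous_on UNIV (F::real \<Rightarrow> real) \<Longrightarrow> continuous (at_right x) F"
  by (metis continuous_on_eq_continuous_within continuous_within_subset top_greatest iso_tuple_UNIV_I)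

lemma interval_measure_eqI:
  fixes F :: "real \<Rightarrow> real"
  assumes rc: "\<And>x. continuous (at_right x) F" and mono: "\<And>x y. x \<le> y \<Longrightarrow> F x \<le> F y"
    and sM: "sets M = sets borel"
    and eq: "\<And>x y. x \<le> y \<Longrightarrow> emeasure M {x<..y} = ennreal (F y - F x)"
  shows "interval_measure F = M"
proof (rule measure_eqI_generator_eq[where \<Omega>=UNIV and E="range (\<lambda>(a, b). {a<..b::real})"
      and A="\<lambda>i. {- real i<..real i}"])
  fix X assume "X \<in> range (\<lambda>(a, b). {a<..b::real})"
  then obtain a b where X: "X = {a<..b}" by auto
  show "emeasure (interval_measure F) X = emeasure M X"
  proof (cases "a \<le> b")
    case True
    then show ?thesis using X eq emeasure_interval_measure_Ioc[OF True mono rc] by simp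
  next
    case False
    then show ?thesis using X by simp
  qed
next
  show "Int_stable (range (\<lambda>(a, b). {a<..b::real}))"
    unfolding Int_stable_def
  proof (intro ballI)
    fix A B assume "A \<in> range (\<lambda>(a, b). {a<..b::real})" "B \<in> range (\<lambda>(a, b). {a<..b::real})"
    then obtain a b c d where "A = {a<..b}" "B = {c<..d}" by auto
    then have "A \<inter> B = {max a c<..min b d}" by auto
    then show "A \<inter> B \<in> range (\<lambda>(a, b). {a<..b::real})" by auto
  qed
next
  show "sets (interval_measure F) = sigma_sets UNIV (range (\<lambda>(a, b). {a<..b::real}))"
    by (simp add: borel_sigma_sets_Ioc)
  show "sets M = sigma_sets UNIV (range (\<lambda>(a, b). {a<..b::real}))"
    using sM by (simp add: borel_sigma_sets_Ioc)
  show "(\<Union>i. {- real (i::nat)<..real i}) = UNIV"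
  proof (intro set_eqI iffI)
    fix x :: real
    obtain n :: nat where "\<bar>x\<bar> < real n" using reals_Archimedean2 by blast
    then show "x \<in> (\<Union>i. {- real (i::nat)<..real i})" by (intro UN_I[of n]) auto
  qed auto
  fix i :: nat
  show "emeasure (interval_measure F) {- real i<..real i} \<noteq> \<infinity>"
    using emeasure_interval_measure_Ioc[of "- real i" "real i" F] mono rc by simp
qed auto

lemma clamp_cont: "continuous_on UNIV (F::real \<Rightarrow> real) \<Longrightarrow> continuous_on UNIV (\<lambda>x. F (max a (min x b)))"
  by (rule continuous_on_compose2[of UNIV F]) (auto intro!: continuous_intros)

lemma clamp_mono: "(\<And>x y. x \<le> y \<Longrightarrow> F x \<le> (F y::real)) \<Longrightarrow> x \<le> (y::real) \<Longrightarrow> F (max a (min x b)) \<le> F (max a (min y b))"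
proof -
  assume m: "\<And>x y. x \<le> y \<Longrightarrow> F x \<le> (F y::real)" and xy: "x \<le> y"
  have "max a (min x b) \<le> max a (min y b)" using xy by (auto simp: max_def min_def)
  then show ?thesis by (rule m)
qed

lemma restr_measure:
  fixes F :: "real \<Rightarrow> real"
  assumes c: "continuous_on UNIV F" and mono: "\<And>x y. x \<le> y \<Longrightarrow> F x \<le> F y" and ab: "a \<le> b"
  shows "density (interval_measure F) (indicator {a..b}) = interval_measure (\<lambda>x. F (max a (min x b)))"
proof (rule interval_measure_eqI[symmetric])
  show "\<And>x. continuous (at_right x) (\<lambda>x. F (max a (min x b)))" using clamp_cont[OF c] cont_right by blast
  show "\<And>x y. x \<le> y \<Longrightarrow> F (max a (min x b)) \<le> F (max a (min y b))" using clamp_mono mono by blast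
  show "sets (density (interval_measure F) (indicator {a..b})) = sets borel" by simp
  fix x y :: real assume xy: "x \<le> y"
  have rc: "\<And>x. continuous (at_right x) F" using c cont_right by blast
  have "emeasure (density (interval_measure F) (indicator {a..b})) {x<..y} = emeasure (interval_measure F) ({a..b} \<inter> {x<..y})"
    by (rule emeasure_restricted) auto
  also have "\<dots> = ennreal (F (max a (min y b)) - F (max a (min x b)))"
  proof -
    consider "y < a" | "b \<le> x" | "x < a" "a \<le> y" "x < b" | "a \<le> x" "x < b" by linarith
    then show ?thesis
    proof cases
      case 1
      then have "{a..b} \<inter> {x<..y} = {}" by auto
      then show ?thesis using 1 xy by simp
    next
      case 2
      then have "{a..b} \<inter> {x<..y} = {}" by auto
      then show ?thesis using 2 xy ab by simp
    next
      case 3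
      then have "{a..b} \<inter> {x<..y} = {a..min y b}" by auto
      then show ?thesis using 3 xy ab emeasure_interval_measure_Icc[of a "min y b" F] mono c
        by (simp add: max_def)
    next
      case 4
      then have "{a..b} \<inter> {x<..y} = {x<..min y b}" by auto
      then show ?thesis using 4 xy ab emeasure_interval_measure_Ioc[of x "min y b" F] mono rc
        by (simp add: max_def)
    qed
  qed
  finally show "emeasure (density (interval_measure F) (indicator {a..b})) {x<..y} =
    ennreal (F (max a (min y b)) - F (max a (min x b)))" .
qed

lemma M1:
  fixes F :: "real \<Rightarrow> real"
  assumes c: "continuous_on UNIV F" and mono: "\<And>x y. x \<le> y \<Longrightarrow> F x \<le> F y" and ab: "a \<le> b"
    and f: "f \<in> borel_measurable borel"
  shows "(\<integral>\<^sup>+ x \<in> {a..b}. f x \<partial>interval_measure F) = (\<integral>\<^sup>+ x. f x \<partial>interval_measure (\<lambda>x. F (max a (min x b))))"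
proof -
  have "(\<integral>\<^sup>+ x. f x \<partial>interval_measure (\<lambda>x. F (max a (min x b)))) =
     (\<integral>\<^sup>+ x. f x \<partial>density (interval_measure F) (indicator {a..b}))"
    using restr_measure[OF c mono ab] by simp
  also have "\<dots> = (\<integral>\<^sup>+ x. indicator {a..b} x * f x \<partial>interval_measure F)"
    by (rule nn_integral_density) (use f in auto)
  finally show ?thesis by (simp add: mult.commute)
qed

lemma M_const: "interval_measure (\<lambda>x. F x + c) = interval_measure F"
  unfolding interval_measure_def by simp

lemma refl_measure:
  fixes F :: "real \<Rightarrow> real"
  assumes c: "continuous_on UNIV F" and mono: "\<And>x y. x \<le> y \<Longrightarrow> F x \<le> F y"
  shows "interval_measure (\<lambda>x. C - F (d - x)) = distr (interval_measure F) borel (\<lambda>x. d - x)"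
proof (rule interval_measure_eqI)
  have "continuous_on UNIV (\<lambda>x. F (d - x))"
    by (rule continuous_on_compose2[OF c]) (auto intro!: continuous_intros)
  then have c2: "continuous_on UNIV (\<lambda>x. C - F (d - x))"
    by (intro continuous_on_diff continuous_on_const)
  then show "\<And>x. continuous (at_right x) (\<lambda>x. C - F (d - x))" using cont_right by blast
  show "\<And>x y. x \<le> y \<Longrightarrow> C - F (d - x) \<le> C - F (d - y)" using mono by simp
  show "sets (distr (interval_measure F) borel (\<lambda>x. d - x)) = sets borel" by simp
  fix x y :: real assume xy: "x \<le> y"
  have meas: "(\<lambda>x. d - x) \<in> measurable (interval_measure F) borel"
    by (simp add: measurable_cong_sets[OF sets_interval_measure refl])
  have "emeasure (distr (interval_measure F) borel (\<lambda>x. d - x)) {x<..y} =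
      emeasure (interval_measure F) ((\<lambda>x. d - x) -` {x<..y} \<inter> space (interval_measure F))"
    by (rule emeasure_distr[OF meas]) simp
  also have "(\<lambda>x. d - x) -` {x<..y} \<inter> space (interval_measure F) = {d - y..<d - x}" by auto
  also have "emeasure (interval_measure F) {d - y..<d - x} = emeasure (interval_measure F) ({d - y..<d - x} \<union> {d - x})"
  proof (rule emeasure_Un_null_set[symmetric])
    show "{d - y..<d - x} \<in> sets (interval_measure F)" by simp
    have "emeasure (interval_measure F) {d - x..d - x} = 0"
      using emeasure_interval_measure_Icc[of "d - x" "d - x" F] mono c by simp
    then show "{d - x} \<in> null_sets (interval_measure F)" by (simp add: null_sets_def)
  qed
  also have "{d - y..<d - x} \<union> {d - x} = {d - y..d - x}" using xy by auto
  also have "emeasure (interval_measure F) {d - y..d - x} = ennreal (F (d - x) - F (d - y))"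
    using emeasure_interval_measure_Icc[of "d - y" "d - x" F] mono c xy by simp
  finally show "emeasure (distr (interval_measure F) borel (\<lambda>x. d - x)) {x<..y} =
      ennreal (C - F (d - y) - (C - F (d - x)))" by simp
qed



definition okp :: "(real \<Rightarrow> 'a::real_normed_vector) \<Rightarrow> real \<Rightarrow> real \<Rightarrow> bool" where
  "okp g s t \<longleftrightarrow> s \<le> t \<and> continuous_on {s..t} g \<and> var_length g s t \<noteq> \<infinity>"

lemma okp_sub: "okp g s t \<Longrightarrow> s \<le> a \<Longrightarrow> a \<le> b \<Longrightarrow> b \<le> t \<Longrightarrow> okp g a b"
  unfolding okp_def using V_fin_sub[of s a b t g]
  by (auto elim: continuous_on_subset)

lemma arclen_eq: "arclen_fun (s, t, g) = (\<lambda>x. enn2real (var_length g s (max s (min x t))))"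
  by (simp add: arclen_fun_def)


lemma clamp_cont_on: "continuous_on A (\<lambda>x::real. max s (min x t))"
  by (intro continuous_on_max continuous_on_min continuous_on_id continuous_on_const)

lemma clamp_img: "s \<le> t \<Longrightarrow> (\<lambda>x::real. max s (min x t)) ` A \<subseteq> {s..t}"
  by auto

lemma clamp_cont_g: "okp g s t \<Longrightarrow> continuous_on UNIV (\<lambda>x. g (max s (min x t)))"
  unfolding okp_def
  using continuous_on_compose2[OF _ clamp_cont_on clamp_img, of s t g UNIV] by simp

lemma meas_clamp: "okp g s t \<Longrightarrow> (\<rho>::'a::real_normed_vector \<Rightarrow> ennreal) \<in> borel_measurable borel \<Longrightarrow>
    (\<lambda>x. \<rho> (g (max s (min x t)))) \<in> borel_measurable borel"
  using measurable_compose[OF borel_measurable_continuous_onI[OF clamp_cont_g]] by blast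

lemma L_cont: "okp g s t \<Longrightarrow> continuous_on UNIV (arclen_fun (s, t, g))"
  unfolding arclen_eq okp_def
  using continuous_on_compose2[OF V_cont[of s t g] clamp_cont_on clamp_img, of UNIV] by simp

lemma L_mono: assumes "okp g s t" "x \<le> y"
  shows "arclen_fun (s, t, g) x \<le> arclen_fun (s, t, g) y"
proof -
  let ?cx = "max s (min x t)" and ?cy = "max s (min y t)"
  have st: "s \<le> t" using assms unfolding okp_def by simp
  have le: "?cx \<le> ?cy" using assms(2) by (auto simp: max_def min_def)
  have fin: "var_length g s ?cy \<noteq> \<infinity>" using assms st V_fin_sub[of s s ?cy t g] unfolding okp_def by auto
  have "enn2real (var_length g s ?cy) = enn2real (var_length g s ?cx) + enn2real (var_length g ?cx ?cy)"
    using V_add_real[OF _ le fin] by simp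
  then show ?thesis unfolding arclen_eq using enn2real_nonneg by (metis le_add_same_cancel1)
qed

lemma LI_set: assumes "okp g s t"
  shows "line_integral \<rho> (s, t, g) = (\<integral>\<^sup>+ x \<in> {s..t}. \<rho> (g (max s (min x t))) \<partial>interval_measure (arclen_fun (s, t, g)))"
proof -
  have "line_integral \<rho> (s, t, g) = (\<integral>\<^sup>+ x \<in> {s..t}. \<rho> (g x) \<partial>interval_measure (arclen_fun (s, t, g)))"
    by (simp add: line_integral_def)
  also have "\<dots> = (\<integral>\<^sup>+ x \<in> {s..t}. \<rho> (g (max s (min x t))) \<partial>interval_measure (arclen_fun (s, t, g)))"
    by (rule nn_integral_cong) (auto simp: indicator_def)
  finally show ?thesis .
qed

lemma LI_norm: assumes ok: "okp g s t" and r: "\<rho> \<in> borel_measurable borel"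
  shows "line_integral \<rho> (s, t, g) = (\<integral>\<^sup>+ x. \<rho> (g (max s (min x t))) \<partial>interval_measure (arclen_fun (s, t, g)))"
proof -
  have st: "s \<le> t" using ok unfolding okp_def by simp
  have "line_integral \<rho> (s, t, g) = (\<integral>\<^sup>+ x. \<rho> (g (max s (min x t))) \<partial>interval_measure (\<lambda>x. arclen_fun (s, t, g) (max s (min x t))))"
    unfolding LI_set[OF ok]
    by (rule M1[OF L_cont[OF ok] L_mono[OF ok] st meas_clamp[OF ok r]])
  also have "(\<lambda>x. arclen_fun (s, t, g) (max s (min x t))) = arclen_fun (s, t, g)"
  proof
    fix x
    have "max s (min (max s (min x t)) t) = max s (min x t)" using st by (auto simp: max_def min_def)
    then show "arclen_fun (s, t, g) (max s (min x t)) = arclen_fun (s, t, g) x" unfolding arclen_eq by simp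
  qed
  finally show ?thesis .
qed

lemma LI_split:
  assumes ok: "okp g s t" and sm: "s \<le> m" and mt: "m \<le> t" and r: "\<rho> \<in> borel_measurable borel"
  shows "line_integral \<rho> (s, t, g) = line_integral \<rho> (s, m, g) + line_integral \<rho> (m, t, g)"
proof -
  have st: "s \<le> t" using sm mt by simp
  have ok1: "okp g s m" using okp_sub[OF ok] sm mt by simp
  have ok2: "okp g m t" using okp_sub[OF ok] sm mt by simp
  define L where "L = arclen_fun (s, t, g)"
  define f where "f = (\<lambda>x. \<rho> (g (max s (min x t))))"
  define f1 where "f1 = (\<lambda>x. \<rho> (g (max s (min x m))))"
  define f2 where "f2 = (\<lambda>x. \<rho> (g (max m (min x t))))"
  have Lc: "continuous_on UNIV L" unfolding L_def by (rule L_cont[OF ok])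
  have Lm: "\<And>x y. x \<le> y \<Longrightarrow> L x \<le> L y" unfolding L_def by (rule L_mono[OF ok])
  have mf1: "f1 \<in> borel_measurable borel" unfolding f1_def by (rule meas_clamp[OF ok1 r])
  have mf2: "f2 \<in> borel_measurable borel" unfolding f2_def by (rule meas_clamp[OF ok2 r])
  have null: "{m} \<in> null_sets (interval_measure L)"
    using emeasure_interval_measure_Icc[of m m L] Lc Lm by (simp add: null_sets_def)
  have "line_integral \<rho> (s, t, g) = (\<integral>\<^sup>+ x. f x * indicator {s..t} x \<partial>interval_measure L)"
    unfolding LI_set[OF ok] L_def f_def by simp
  also have "\<dots> = (\<integral>\<^sup>+ x. f1 x * indicator {s..m} x + f2 x * indicator {m..t} x \<partial>interval_measure L)"
  proof (rule nn_integral_cong_AE)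
    show "AE x in interval_measure L. f x * indicator {s..t} x = f1 x * indicator {s..m} x + f2 x * indicator {m..t} x"
    proof (rule AE_I'[OF null])
      show "{x \<in> space (interval_measure L). \<not> f x * indicator {s..t} x = f1 x * indicator {s..m} x + f2 x * indicator {m..t} x} \<subseteq> {m}"
      proof (rule subsetI, rule ccontr)
        fix x assume x: "x \<in> {x \<in> space (interval_measure L). \<not> f x * indicator {s..t} x = f1 x * indicator {s..m} x + f2 x * indicator {m..t} x}"
          and xm: "x \<notin> {m}"
        have ne: "\<not> f x * indicator {s..t} x = f1 x * indicator {s..m} x + f2 x * indicator {m..t} x" using x by simp
        consider "x < s" | "s \<le> x" "x < m" | "m < x" "x \<le> t" | "t < x" using xm by force
        then show False
        proof cases
          case 1
          then have "x \<notin> {s..t}" "x \<notin> {s..m}" "x \<notin> {m..t}" using sm by auto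
          then show ?thesis using ne by simp
        next
          case 2
          then have "x \<in> {s..t}" "x \<in> {s..m}" "x \<notin> {m..t}" using mt by auto
          moreover have "max s (min x t) = x" "max s (min x m) = x" using 2 mt by auto
          ultimately show ?thesis using ne unfolding f_def f1_def by simp
        next
          case 3
          then have "x \<in> {s..t}" "x \<notin> {s..m}" "x \<in> {m..t}" using sm by auto
          moreover have "max s (min x t) = x" "max m (min x t) = x" using 3 sm by auto
          ultimately show ?thesis using ne unfolding f_def f2_def by simp
        next
          case 4
          then have "x \<notin> {s..t}" "x \<notin> {s..m}" "x \<notin> {m..t}" using mt by auto
          then show ?thesis using ne by simp
        qed
      qed
    qed
  qed
  also have "\<dots> = (\<integral>\<^sup>+ x. f1 x * indicator {s..m} x \<partial>interval_measure L) + (\<integral>\<^sup>+ x. f2 x * indicator {m..t} x \<partial>interval_measure L)"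
    by (rule nn_integral_add) (use mf1 mf2 in auto)
  also have "(\<integral>\<^sup>+ x. f1 x * indicator {s..m} x \<partial>interval_measure L) = line_integral \<rho> (s, m, g)"
  proof -
    have "(\<integral>\<^sup>+ x. f1 x * indicator {s..m} x \<partial>interval_measure L) = (\<integral>\<^sup>+ x. f1 x \<partial>interval_measure (\<lambda>x. L (max s (min x m))))"
      by (rule M1[OF Lc Lm sm mf1])
    also have "(\<lambda>x. L (max s (min x m))) = arclen_fun (s, m, g)"
    proof
      fix x
      have "max s (min (max s (min x m)) t) = max s (min x m)" using sm mt by (auto simp: max_def min_def)
      then show "L (max s (min x m)) = arclen_fun (s, m, g) x" unfolding L_def arclen_eq by simp
    qed
    finally show ?thesis unfolding LI_norm[OF ok1 r] f1_def .
  qed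
  also have "(\<integral>\<^sup>+ x. f2 x * indicator {m..t} x \<partial>interval_measure L) = line_integral \<rho> (m, t, g)"
  proof -
    have "(\<integral>\<^sup>+ x. f2 x * indicator {m..t} x \<partial>interval_measure L) = (\<integral>\<^sup>+ x. f2 x \<partial>interval_measure (\<lambda>x. L (max m (min x t))))"
      by (rule M1[OF Lc Lm mt mf2])
    also have "(\<lambda>x. L (max m (min x t))) = (\<lambda>x. arclen_fun (m, t, g) x + enn2real (var_length g s m))"
    proof
      fix x
      let ?c = "max m (min x t)"
      have "max s (min ?c t) = ?c" using sm mt by (auto simp: max_def min_def)
      moreover have "m \<le> ?c" "?c \<le> t" using mt by auto
      moreover have "var_length g s ?c \<noteq> \<infinity>" using ok V_fin_sub[of s s ?c t g] sm mt unfolding okp_def by auto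
      ultimately show "L ?c = arclen_fun (m, t, g) x + enn2real (var_length g s m)"
        unfolding L_def arclen_eq using V_add_real[of s m ?c g] sm by simp
    qed
    also have "interval_measure \<dots> = interval_measure (arclen_fun (m, t, g))" by (rule M_const)
    finally show ?thesis unfolding LI_norm[OF ok2 r] f2_def .
  qed
  finally show ?thesis .
qed



lemma okp_cong: assumes "okp g s t" "\<And>x. x \<in> {s..t} \<Longrightarrow> g x = g' x" shows "okp g' s t"
proof -
  have "var_length g s t = var_length g' s t" by (rule V_cong) (use assms(2) in auto)
  moreover have "continuous_on {s..t} g'"
    using assms unfolding okp_def using continuous_on_cong[of "{s..t}" "{s..t}" g g'] by simp
  ultimately show ?thesis using assms unfolding okp_def by simp
qed

lemma LI_cong: assumes st: "s \<le> t" and eq: "\<And>x. x \<in> {s..t} \<Longrightarrow> g x = g' x"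
  shows "line_integral \<rho> (s, t, g) = line_integral \<rho> (s, t, g')"
proof -
  have "arclen_fun (s, t, g) = arclen_fun (s, t, g')"
    unfolding arclen_eq
  proof
    fix x
    have "max s (min x t) \<le> t" using st by simp
    then have "var_length g s (max s (min x t)) = var_length g' s (max s (min x t))"
      by (intro V_cong) (use eq in auto)
    then show "enn2real (var_length g s (max s (min x t))) = enn2real (var_length g' s (max s (min x t)))"
      by simp
  qed
  moreover have "(\<integral>\<^sup>+ x \<in> {s..t}. \<rho> (g x) \<partial>M) = (\<integral>\<^sup>+ x \<in> {s..t}. \<rho> (g' x) \<partial>M)" for M
    by (rule nn_integral_cong) (auto simp: indicator_def eq)
  ultimately show ?thesis by (simp add: line_integral_def)
qed

lemma okp_refl: assumes ok: "okp g s t" shows "okp (\<lambda>x. g (d - x)) (d - t) (d - s)"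
proof -
  have c1: "continuous_on {d - t..d - s} (\<lambda>x::real. d - x)"
    by (intro continuous_on_diff continuous_on_const continuous_on_id)
  have c2: "(\<lambda>x::real. d - x) ` {d - t..d - s} \<subseteq> {s..t}" by auto
  have "continuous_on {d - t..d - s} (\<lambda>x. g (d - x))"
    using ok unfolding okp_def using continuous_on_compose2[OF _ c1 c2, of g] by simp
  moreover have "var_length (\<lambda>x. g (d - x)) (d - t) (d - s) = var_length g s t"
    using V_refl[of g d "d - t" "d - s"] by simp
  ultimately show ?thesis using ok unfolding okp_def by simp
qed

lemma LI_refl: assumes ok: "okp g s t" and r: "\<rho> \<in> borel_measurable borel"
  shows "line_integral \<rho> (d - t, d - s, \<lambda>x. g (d - x)) = line_integral \<rho> (s, t, g)"
proof -
  have st: "s \<le> t" using ok unfolding okp_def by simp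
  define L where "L = arclen_fun (s, t, g)"
  define C where "C = enn2real (var_length g s t)"
  have Lc: "continuous_on UNIV L" unfolding L_def by (rule L_cont[OF ok])
  have Lm: "\<And>x y. x \<le> y \<Longrightarrow> L x \<le> L y" unfolding L_def by (rule L_mono[OF ok])
  have cl: "d - max (d - t) (min x (d - s)) = max s (min (d - x) t)" for x
    using st by (auto simp: max_def min_def)
  have A: "arclen_fun (d - t, d - s, \<lambda>x. g (d - x)) = (\<lambda>x. C - L (d - x))"
  proof
    fix x
    let ?c = "max s (min (d - x) t)"
    have "arclen_fun (d - t, d - s, \<lambda>x. g (d - x)) x = enn2real (var_length g ?c t)"
      unfolding arclen_eq V_refl[of g d] cl by simp
    moreover have "var_length g s t \<noteq> \<infinity>" using ok unfolding okp_def by simp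
    moreover have "s \<le> ?c" "?c \<le> t" using st by auto
    ultimately show "arclen_fun (d - t, d - s, \<lambda>x. g (d - x)) x = C - L (d - x)"
      unfolding C_def L_def arclen_eq using V_add_real[of s ?c t g] by simp
  qed
  have meas: "(\<lambda>x. d - x) \<in> measurable (interval_measure L) borel"
    by (simp add: measurable_cong_sets[OF sets_interval_measure refl])
  have mf: "(\<lambda>x. \<rho> (g (d - max (d - t) (min x (d - s))))) \<in> borel_measurable borel"
    using meas_clamp[OF okp_refl[OF ok, of d] r] by simp
  have "line_integral \<rho> (d - t, d - s, \<lambda>x. g (d - x)) =
      (\<integral>\<^sup>+ x. \<rho> (g (d - max (d - t) (min x (d - s)))) \<partial>interval_measure (\<lambda>x. C - L (d - x)))"
    unfolding LI_norm[OF okp_refl[OF ok] r] A by simp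
  also have "\<dots> = (\<integral>\<^sup>+ x. \<rho> (g (d - max (d - t) (min x (d - s)))) \<partial>distr (interval_measure L) borel (\<lambda>x. d - x))"
    by (simp add: refl_measure[OF Lc Lm])
  also have "\<dots> = (\<integral>\<^sup>+ x. \<rho> (g (d - max (d - t) (min (d - x) (d - s)))) \<partial>interval_measure L)"
    by (rule nn_integral_distr[OF meas]) (use mf in simp)
  also have "\<dots> = (\<integral>\<^sup>+ x. \<rho> (g (max s (min x t))) \<partial>interval_measure L)"
  proof -
    have "d - max (d - t) (min (d - x) (d - s)) = max s (min x t)" for x using st by (auto simp: max_def min_def)
    then show ?thesis by simp
  qed
  also have "\<dots> = line_integral \<rho> (s, t, g)" unfolding LI_norm[OF ok r] L_def ..
  finally show ?thesis .
qed



lemma rect_okp: "rectifiable (s, t, g) \<Longrightarrow> okp g s t"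
  unfolding rectifiable_def is_path_def okp_def by (simp add: less_top)

lemma okp_glue: assumes "okp g a m" "okp g m b" shows "okp g a b"
proof -
  have am: "a \<le> m" "m \<le> b" using assms unfolding okp_def by auto
  have "continuous_on ({a..m} \<union> {m..b}) g"
    using assms unfolding okp_def by (intro continuous_on_closed_Un) (simp_all)
  moreover have "{a..m} \<union> {m..b} = {a..b}" using am by auto
  moreover have "var_length g a b = var_length g a m + var_length g m b" by (rule V_add[OF am])
  ultimately show ?thesis using assms am unfolding okp_def by auto
qed

lemma shift_path: assumes ok: "okp g s t" and r: "\<rho> \<in> borel_measurable borel"
  shows "okp (\<lambda>x. g (x - e)) (s + e) (t + e) \<and> line_integral \<rho> (s + e, t + e, \<lambda>x. g (x - e)) = line_integral \<rho> (s, t, g)"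
proof -
  have ok1: "okp (\<lambda>x. g (0 - x)) (0 - t) (0 - s)" by (rule okp_refl[OF ok])
  have l1: "line_integral \<rho> (0 - t, 0 - s, \<lambda>x. g (0 - x)) = line_integral \<rho> (s, t, g)" by (rule LI_refl[OF ok r])
  have ok2: "okp (\<lambda>x. (\<lambda>x. g (0 - x)) (e - x)) (e - (0 - s)) (e - (0 - t))" by (rule okp_refl[OF ok1])
  have l2: "line_integral \<rho> (e - (0 - s), e - (0 - t), \<lambda>x. (\<lambda>x. g (0 - x)) (e - x)) = line_integral \<rho> (0 - t, 0 - s, \<lambda>x. g (0 - x))"
    by (rule LI_refl[OF ok1 r])
  have eq: "(\<lambda>x. (\<lambda>x. g (0 - x)) (e - x)) = (\<lambda>x. g (x - e))" by simp
  have e1: "e - (0 - s) = s + e" "e - (0 - t) = t + e" by simp_all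
  show ?thesis using ok2 l2 l1 unfolding eq e1 by simp
qed

lemma path_in_D:
  assumes c: "(s, t, g) \<in> connecting_paths E F D" and E: "E \<subseteq> D" and F: "F \<subseteq> D" and x: "x \<in> {s..t}"
  shows "g x \<in> D"
proof -
  have "g s \<in> E" "g t \<in> F" "\<And>\<tau>. s < \<tau> \<and> \<tau> < t \<Longrightarrow> g \<tau> \<in> D" using c unfolding connecting_paths_def by auto
  then show ?thesis using E F x by (cases "x = s"; cases "x = t") auto
qed

lemma core:
  fixes \<rho> :: "'a::euclidean_space \<Rightarrow> ennreal"
  assumes r: "\<rho> \<in> borel_measurable borel"
    and adm: "\<forall>c\<in>connecting_paths F1 F2 D. rectifiable c \<longrightarrow> line_integral \<rho> c \<ge> 1"
    and c1: "(s1, t1, g1) \<in> connecting_paths F1 F3 D" "rectifiable (s1, t1, g1)"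
    and c2: "(s2, t2, g2) \<in> connecting_paths F2 F3 D" "rectifiable (s2, t2, g2)"
    and cb: "(s, t, h) \<in> connecting_paths (locus (s1, t1, g1)) (locus (s2, t2, g2)) D" "rectifiable (s, t, h)"
    and F: "F1 \<subseteq> D" "F2 \<subseteq> D" "F3 \<subseteq> D"
  shows "1 \<le> line_integral \<rho> (s1, t1, g1) + line_integral \<rho> (s, t, h) + line_integral \<rho> (s2, t2, g2)"
proof -
  have ok1: "okp g1 s1 t1" using rect_okp c1 by blast
  have ok2: "okp g2 s2 t2" using rect_okp c2 by blast
  have okb: "okp h s t" using rect_okp cb by blast
  have st: "s < t" using cb unfolding rectifiable_def is_path_def by auto
  have D1: "\<And>x. x \<in> {s1..t1} \<Longrightarrow> g1 x \<in> D" using path_in_D[OF c1(1)] F by blast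
  have D2: "\<And>x. x \<in> {s2..t2} \<Longrightarrow> g2 x \<in> D" using path_in_D[OF c2(1)] F by blast
  have L1: "locus (s1, t1, g1) \<subseteq> D" using D1 unfolding locus_def by auto
  have L2: "locus (s2, t2, g2) \<subseteq> D" using D2 unfolding locus_def by auto
  have Db: "\<And>x. x \<in> {s..t} \<Longrightarrow> h x \<in> D" using path_in_D[OF cb(1) L1 L2] by blast
  have "h s \<in> locus (s1, t1, g1)" "h t \<in> locus (s2, t2, g2)" using cb unfolding connecting_paths_def by auto
  then obtain u v where u: "u \<in> {s1..t1}" "h s = g1 u" and v: "v \<in> {s2..t2}" "h t = g2 v"
    unfolding locus_def by auto
  define e where "e = u - s"
  define m2 where "m2 = t + e"
  define d where "d = m2 + v"
  define T where "T = d - s2"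
  define G where "G = (\<lambda>x. if x \<le> u then g1 x else if x \<le> m2 then h (x - e) else g2 (d - x))"
  have um2: "u < m2" unfolding m2_def e_def using st by simp
  have m2T: "m2 \<le> T" unfolding T_def d_def using v by simp
  have su: "s + e = u" unfolding e_def by simp
  have okA: "okp g1 s1 u" using okp_sub[OF ok1] u by auto
  have shb: "okp (\<lambda>x. h (x - e)) u m2 \<and> line_integral \<rho> (u, m2, \<lambda>x. h (x - e)) = line_integral \<rho> (s, t, h)"
    using shift_path[OF okb r, of e] su unfolding m2_def by simp
  have okv: "okp g2 s2 v" using okp_sub[OF ok2] v by auto
  have okC: "okp (\<lambda>x. g2 (d - x)) m2 T" using okp_refl[OF okv, of d] unfolding T_def d_def by simp
  have lC: "line_integral \<rho> (m2, T, \<lambda>x. g2 (d - x)) = line_integral \<rho> (s2, v, g2)"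
    using LI_refl[OF okv r, of d] unfolding T_def d_def by simp
  have GA: "\<And>x. x \<in> {s1..u} \<Longrightarrow> G x = g1 x" unfolding G_def by auto
  have GB: "\<And>x. x \<in> {u..m2} \<Longrightarrow> G x = h (x - e)"
  proof -
    fix x assume x: "x \<in> {u..m2}"
    show "G x = h (x - e)"
    proof (cases "x = u")
      case True
      have "u - e = s" unfolding e_def by simp
      then show ?thesis unfolding G_def using True u(2) by simp
    next
      case False
      then show ?thesis using x unfolding G_def by auto
    qed
  qed
  have GC: "\<And>x. x \<in> {m2..T} \<Longrightarrow> G x = g2 (d - x)"
  proof -
    fix x assume x: "x \<in> {m2..T}"
    show "G x = g2 (d - x)"
    proof (cases "x = m2")
      case True
      have "m2 - e = t" unfolding m2_def by simp
      moreover have "d - m2 = v" unfolding d_def by simp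
      ultimately show ?thesis unfolding G_def using True um2 v(2) by auto
    next
      case False
      then show ?thesis using x um2 unfolding G_def by auto
    qed
  qed
  have okGA: "okp G s1 u" by (rule okp_cong[OF okA]) (use GA in auto)
  have okGB: "okp G u m2" by (rule okp_cong[OF conjunct1[OF shb]]) (use GB in auto)
  have okGC: "okp G m2 T" by (rule okp_cong[OF okC]) (use GC in auto)
  have okG: "okp G s1 T" using okp_glue[OF okGA okp_glue[OF okGB okGC]] .
  have s1u: "s1 \<le> u" using u by simp
  have memG: "(s1, T, G) \<in> connecting_paths F1 F2 D"
    unfolding connecting_paths_def
  proof (intro CollectI conjI case_prodI allI impI)
    show "is_path (s1, T, G)" using okG s1u um2 m2T unfolding okp_def is_path_def by auto
    show "G s1 \<in> F1" using GA[of s1] s1u c1(1) unfolding connecting_paths_def by auto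
    have "G T = g2 s2" using GC[of T] m2T unfolding T_def by simp
    then show "G T \<in> F2" using c2(1) unfolding connecting_paths_def by auto
    fix \<tau> assume tau: "s1 < \<tau> \<and> \<tau> < T"
    consider "\<tau> \<le> u" | "u \<le> \<tau>" "\<tau> \<le> m2" | "m2 \<le> \<tau>" by linarith
    then show "G \<tau> \<in> D"
    proof cases
      case 1 then show ?thesis using GA[of \<tau>] D1[of \<tau>] tau u by auto
    next
      case 2
      have "\<tau> - e \<in> {s..t}" using 2 unfolding e_def m2_def by auto
      then show ?thesis using GB[of \<tau>] Db 2 by auto
    next
      case 3
      have "d - \<tau> \<in> {s2..t2}" using 3 tau v unfolding d_def T_def by auto
      then show ?thesis using GC[of \<tau>] D2 3 tau by auto
    qed
  qed
  have rectG: "rectifiable (s1, T, G)"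
    using okG memG unfolding rectifiable_def connecting_paths_def okp_def by (auto simp: less_top)
  have one: "1 \<le> line_integral \<rho> (s1, T, G)" using adm memG rectG by blast
  have "line_integral \<rho> (s1, T, G) = line_integral \<rho> (s1, u, G) + line_integral \<rho> (u, T, G)"
    using LI_split[OF okG s1u _ r] um2 m2T by simp
  also have "line_integral \<rho> (u, T, G) = line_integral \<rho> (u, m2, G) + line_integral \<rho> (m2, T, G)"
    using LI_split[OF okp_glue[OF okGB okGC] _ m2T r] um2 by simp
  also have "line_integral \<rho> (s1, u, G) = line_integral \<rho> (s1, u, g1)"
    by (rule LI_cong[OF s1u]) (use GA in auto)
  also have "line_integral \<rho> (u, m2, G) = line_integral \<rho> (s, t, h)"
    using LI_cong[of u m2 G "\<lambda>x. h (x - e)" \<rho>] GB um2 shb by simp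
  also have "line_integral \<rho> (m2, T, G) = line_integral \<rho> (s2, v, g2)"
    using LI_cong[OF m2T, of G "\<lambda>x. g2 (d - x)" \<rho>] GC lC by simp
  finally have one': "1 \<le> line_integral \<rho> (s1, u, g1) + (line_integral \<rho> (s, t, h) + line_integral \<rho> (s2, v, g2))"
    using one by simp
  have "line_integral \<rho> (s1, t1, g1) = line_integral \<rho> (s1, u, g1) + line_integral \<rho> (u, t1, g1)"
    using LI_split[OF ok1 _ _ r] u by simp
  then have a: "line_integral \<rho> (s1, u, g1) \<le> line_integral \<rho> (s1, t1, g1)" by simp
  have "line_integral \<rho> (s2, t2, g2) = line_integral \<rho> (s2, v, g2) + line_integral \<rho> (v, t2, g2)"
    using LI_split[OF ok2 _ _ r] v by simp
  then have b: "line_integral \<rho> (s2, v, g2) \<le> line_integral \<rho> (s2, t2, g2)" by simp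
  have "line_integral \<rho> (s1, u, g1) + (line_integral \<rho> (s, t, h) + line_integral \<rho> (s2, v, g2))
     \<le> line_integral \<rho> (s1, t1, g1) + (line_integral \<rho> (s, t, h) + line_integral \<rho> (s2, t2, g2))"
    by (intro add_mono a b order_refl)
  from order_trans[OF one' this] show ?thesis by (simp only: add.assoc)
qed



lemma enn_powr_meas: "(\<lambda>x. enn_powr x p) \<in> borel_measurable borel"
  unfolding enn_powr_def by measurable

lemma enn_powr_3: assumes p: "0 < p"
  shows "enn_powr (3 * x) p = ennreal (3 powr p) * enn_powr x p"
proof (cases "x = \<infinity>")
  case True
  have "(3::ennreal) * top = top" by simp
  moreover have "ennreal (3 powr p) \<noteq> 0" by simp
  ultimately show ?thesis using True unfolding enn_powr_def by simp
next
  case False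
  have ne: "3 * x \<noteq> \<infinity>" using False by (simp add: ennreal_mult_eq_top_iff)
  have "enn2real (3 * x) = 3 * enn2real x" by (simp add: enn2real_mult)
  then have "enn2real (3 * x) powr p = 3 powr p * enn2real x powr p"
    by (simp add: powr_mult)
  then show ?thesis using False ne unfolding enn_powr_def by (simp add: ennreal_mult)
qed

lemma LI_cmult3: assumes "rectifiable c" and r: "\<rho> \<in> borel_measurable borel"
  shows "line_integral (\<lambda>x. 3 * \<rho> x) c = 3 * line_integral \<rho> c"
proof -
  obtain s t g where c: "c = (s, t, g)" by (cases c) auto
  have ok: "okp g s t" using rect_okp assms c by blast
  have r3: "(\<lambda>x. 3 * \<rho> x) \<in> borel_measurable borel" using r by measurable
  show ?thesis unfolding c LI_norm[OF ok r] LI_norm[OF ok r3]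
    by (rule nn_integral_cmult) (simp add: measurable_cong_sets[OF sets_interval_measure refl] meas_clamp[OF ok r])
qed

lemma ennreal3:
  fixes a b c :: ennreal
  assumes "1 \<le> a + b + c" "3 * a < 1" "3 * c < 1"
  shows "1 \<le> 3 * b"
proof (rule ccontr)
  assume "\<not> 1 \<le> 3 * b"
  then have b: "3 * b < 1" by simp
  have fa: "a < top" "b < top" "c < top" using assms(2,3) b
    by (auto simp: less_top[symmetric])
  then obtain x y z where xyz: "a = ennreal x" "b = ennreal y" "c = ennreal z" "0 \<le> x" "0 \<le> y" "0 \<le> z"
    by (metis enn2real_nonneg ennreal_enn2real)
  have "3 * x < 1" "3 * y < 1" "3 * z < 1" using assms b xyz
    by (auto simp: ennreal_mult''[symmetric] ennreal_less_iff simp flip: ennreal_1 ennreal_numeral)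
  moreover have "1 \<le> x + y + z" using assms(1) xyz
    by (simp flip: ennreal_plus ennreal_1)
  ultimately show False by linarith
qed

theorem lemma2p2:
  fixes D F1 F2 F3 :: "(real ^ 'n) set" and p :: real
  assumes "CARD('n) \<ge> 2"
    and "p > real CARD('n) - 1"
    and "open D" and "connected D" and "D \<noteq> {}"
    and "F1 \<subseteq> D" and "F2 \<subseteq> D" and "F3 \<subseteq> D"
  shows "p_modulus p (connecting_paths F1 F2 D) \<ge>
    ennreal (3 powr (- p)) *
      min (p_modulus p (connecting_paths F1 F3 D))
        (min (p_modulus p (connecting_paths F2 F3 D))
          (INF c \<in> {(c13, c23). c13 \<in> connecting_paths F1 F3 D \<and> rectifiable c13 \<and>
                                c23 \<in> connecting_paths F2 F3 D \<and> rectifiable c23}.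
             p_modulus p (connecting_paths (locus (fst c)) (locus (snd c)) D)))"
proof -
  have "real CARD('n) \<ge> 2" using assms(1) by simp
  then have p0: "0 < p" using assms(2) by linarith
  define m where "m = min (p_modulus p (connecting_paths F1 F3 D))
        (min (p_modulus p (connecting_paths F2 F3 D))
          (INF c \<in> {(c13, c23). c13 \<in> connecting_paths F1 F3 D \<and> rectifiable c13 \<and>
                                c23 \<in> connecting_paths F2 F3 D \<and> rectifiable c23}.
             p_modulus p (connecting_paths (locus (fst c)) (locus (snd c)) D)))"
  have key: "ennreal (3 powr (- p)) * m \<le> (\<integral>\<^sup>+ x. enn_powr (\<rho> x) p \<partial>lborel)"
    if adm: "admissible p (connecting_paths F1 F2 D) \<rho>" for \<rho> :: "real ^ 'n \<Rightarrow> ennreal"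
  proof -
    have r: "\<rho> \<in> borel_measurable borel" using adm unfolding admissible_def by simp
    have adm': "\<forall>c\<in>connecting_paths F1 F2 D. rectifiable c \<longrightarrow> line_integral \<rho> c \<ge> 1"
      using adm unfolding admissible_def by simp
    define \<rho>3 where "\<rho>3 = (\<lambda>x. 3 * \<rho> x)"
    have r3: "\<rho>3 \<in> borel_measurable borel" unfolding \<rho>3_def using r by measurable
    have mp: "(\<lambda>x. enn_powr (\<rho> x) p) \<in> borel_measurable lborel"
      using measurable_compose[OF r enn_powr_meas] by simp
    have I3: "(\<integral>\<^sup>+ x. enn_powr (\<rho>3 x) p \<partial>lborel) = ennreal (3 powr p) * (\<integral>\<^sup>+ x. enn_powr (\<rho> x) p \<partial>lborel)"
      unfolding \<rho>3_def enn_powr_3[OF p0] by (rule nn_integral_cmult[OF mp])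
    have LI3: "line_integral \<rho>3 c = 3 * line_integral \<rho> c" if "rectifiable c" for c
      unfolding \<rho>3_def by (rule LI_cmult3[OF that r])
    have lowI: "p_modulus p \<Gamma> \<le> (\<integral>\<^sup>+ x. enn_powr (\<rho>3 x) p \<partial>lborel)" if "admissible p \<Gamma> \<rho>3" for \<Gamma>
      unfolding p_modulus_def by (rule INF_lower) (use that in simp)
    have main: "m \<le> (\<integral>\<^sup>+ x. enn_powr (\<rho>3 x) p \<partial>lborel)"
    proof (cases "admissible p (connecting_paths F1 F3 D) \<rho>3")
      case True
      then show ?thesis unfolding m_def using lowI by (meson min.coboundedI1)
    next
      case F13: False
      show ?thesis
      proof (cases "admissible p (connecting_paths F2 F3 D) \<rho>3")
        case True
        then show ?thesis unfolding m_def using lowI by (meson min.coboundedI1 min.coboundedI2)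
      next
        case F23: False
        obtain c1 where c1: "c1 \<in> connecting_paths F1 F3 D" "rectifiable c1" "\<not> 1 \<le> line_integral \<rho>3 c1"
          using F13 r3 unfolding admissible_def by auto
        obtain c2 where c2: "c2 \<in> connecting_paths F2 F3 D" "rectifiable c2" "\<not> 1 \<le> line_integral \<rho>3 c2"
          using F23 r3 unfolding admissible_def by auto
        obtain s1 t1 g1 where e1: "c1 = (s1, t1, g1)" by (cases c1) auto
        obtain s2 t2 g2 where e2: "c2 = (s2, t2, g2)" by (cases c2) auto
        have a1: "3 * line_integral \<rho> c1 < 1" using c1 LI3 by (simp add: not_le)
        have a2: "3 * line_integral \<rho> c2 < 1" using c2 LI3 by (simp add: not_le)
        have admb: "admissible p (connecting_paths (locus c1) (locus c2) D) \<rho>3"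
          unfolding admissible_def
        proof (intro conjI ballI impI r3)
          fix b assume b: "b \<in> connecting_paths (locus c1) (locus c2) D" "rectifiable b"
          obtain s t h where eb: "b = (s, t, h)" by (cases b) auto
          have "1 \<le> line_integral \<rho> c1 + line_integral \<rho> b + line_integral \<rho> c2"
            unfolding e1 e2 eb
            by (rule core[OF r adm' c1(1,2)[unfolded e1] c2(1,2)[unfolded e2] b[unfolded eb e1 e2] assms(6,7,8)])
          then have "1 \<le> 3 * line_integral \<rho> b" using ennreal3 a1 a2 by blast
          then show "1 \<le> line_integral \<rho>3 b" using LI3[OF b(2)] by simp
        qed
        have "(INF c \<in> {(c13, c23). c13 \<in> connecting_paths F1 F3 D \<and> rectifiable c13 \<and>
                                c23 \<in> connecting_paths F2 F3 D \<and> rectifiable c23}.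
             p_modulus p (connecting_paths (locus (fst c)) (locus (snd c)) D))
           \<le> p_modulus p (connecting_paths (locus c1) (locus c2) D)"
          by (rule INF_lower2[of "(c1, c2)"]) (use c1 c2 in auto)
        also have "\<dots> \<le> (\<integral>\<^sup>+ x. enn_powr (\<rho>3 x) p \<partial>lborel)" by (rule lowI[OF admb])
        finally show ?thesis unfolding m_def by (meson min.coboundedI2)
      qed
    qed
    have "ennreal (3 powr (- p)) * m \<le> ennreal (3 powr (- p)) * (ennreal (3 powr p) * (\<integral>\<^sup>+ x. enn_powr (\<rho> x) p \<partial>lborel))"
      using main I3 by (simp add: mult_left_mono)
    also have "\<dots> = (ennreal (3 powr (- p)) * ennreal (3 powr p)) * (\<integral>\<^sup>+ x. enn_powr (\<rho> x) p \<partial>lborel)"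
      by (simp add: mult.assoc)
    also have "ennreal (3 powr (- p)) * ennreal (3 powr p) = 1"
    proof -
      have "ennreal (3 powr (- p)) * ennreal (3 powr p) = ennreal (3 powr (- p) * 3 powr p)"
        by (simp add: ennreal_mult)
      also have "3 powr (- p) * 3 powr p = (1::real)" by (simp add: powr_add[symmetric])
      finally show ?thesis by simp
    qed
    finally show ?thesis by simp
  qed
  have "ennreal (3 powr (- p)) * m \<le> p_modulus p (connecting_paths F1 F2 D)"
    unfolding p_modulus_def[of p "connecting_paths F1 F2 D"]
    by (rule INF_greatest) (use key in simp)
  then show ?thesis unfolding m_def .
qed

end
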